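(* In the general model, put $\theta=\lambda^{-1}$. For every integer $s\ge1$ and every $t\in[\theta^{s-1},\theta^{s}]$, $$\mathbb{E}\,|\widehat{\mu}(t)|^2\le \ell^{-s}+(\ell-1)\sum_{k=0}^{s-1}\ell^{-k-1}\,|\widehat{\nu}(t\lambda^k)|^2 .$$
   Context: General model. Let $\ell\ge 2$ and let $T=\{1,\dots,\ell\}^*$ be the set of finite words over $\{1,\dots,\ell\}$ (the rooted $\ell$-regular tree; the root is the empty word, $|v|$ is the length of $v$, and $v|j$ is the prefix of $v$ of length $j$). Let $D\subset\mathbb{R}$ be a finite set and $\eta=\sum_{d\in D}p_d\delta_d$ a probability measure on $D$. Let $\{a_v\}_{v\in T,\,|v|\ge 1}$ be i.i.d. random variables with law $\eta$. Fix $\lambda\in(0,1)$. For $v\in T$ with $|v|=n$ put $f(v)=\sum_{j=1}^n a_{v|j}\lambda^j$, and for an infinite word $\omega\in\{1,\dots,\ell\}^{\mathbb{N}}$ put $f(\omega)=\sum_{j\ge1}a_{\omega|j}\lambda^j$. The random probability measure $\mu$ is the image under $f$ of the uniform product measure on $\{1,\dots,\ell\}^{\mathbb{N}}$ (equivalently the a.s. weak limit of $\mu_n=\ell^{-n}\sum_{|v|=n}\delta_{f(v)}$). Let $\nu$ be the deterministic law of $\sum_{n\ge1}b_n\lambda^n$, where $b_n$ are i.i.d. with law $\eta$. Fourier transforms are $\widehat{\rho}(t)=\int e^{itx}\,d\rho(x)$; thus $\widehat{\nu}(t)=\prod_{n\ge1}\widehat{\eta}(t\lambda^n)$. $\mathbb{E}$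 denotes expectation over the random labels. *)

theory Defs
  imports "HOL-Probability.Probability"
begin

definition wordM :: "nat \<Rightarrow> (nat \<Rightarrow> nat) measure" where
  "wordM l = PiM UNIV (\<lambda>_::nat. measure_pmf (pmf_of_set {1..l}))"

text \<open>Prefix of length j of an infinite word, as a finite word (vertex of the tree).\<close>
definition pref :: "(nat \<Rightarrow> nat) \<Rightarrow> nat \<Rightarrow> nat list" where
  "pref \<omega> j = map \<omega> [0..<j]"

definition fval :: "real \<Rightarrow> (nat list \<Rightarrow> real) \<Rightarrow> (nat \<Rightarrow> nat) \<Rightarrow> real" where
  "fval lam a \<omega> = (\<Sum>j. a (pref \<omega> (Suc j)) * lam ^ Suc j)"

definition rmu :: "nat \<Rightarrow> real \<Rightarrow> (nat list \<Rightarrow> real) \<Rightarrow> real measure" where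
  "rmu l lam a = distr (wordM l) borel (fval lam a)"

text \<open>Law of the i.i.d. labels (eta-distributed) indexed by the vertices of the tree.
  (The label at the root is never used.)\<close>
definition labelM :: "real pmf \<Rightarrow> (nat list \<Rightarrow> real) measure" where
  "labelM \<eta> = PiM UNIV (\<lambda>_::nat list. measure_pmf \<eta>)"

text \<open>nu = law of sum_{n>=1} b_n lambda^n with b_n i.i.d. eta (here b is indexed from 0).\<close>
definition nu :: "real pmf \<Rightarrow> real \<Rightarrow> real measure" where
  "nu \<eta> lam = distr (PiM UNIV (\<lambda>_::nat. measure_pmf \<eta>)) borel
                 (\<lambda>b. \<Sum>n. b n * lam ^ Suc n)"

end

theory Submission
  imports Defs
begin

lemma sets_W[simp]: "sets (wordM l) = sets (PiM UNIV (\<lambda>_::nat. count_space (UNIV::nat set)))"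
  unfolding wordM_def by (intro sets_PiM_cong) auto
lemma sets_L[simp]: "sets (labelM \<eta>) = sets (PiM UNIV (\<lambda>_::nat list. count_space (UNIV::real set)))"
  unfolding labelM_def by (intro sets_PiM_cong) auto
lemma pref_meas[measurable]: "(\<lambda>\<omega>. pref \<omega> n) \<in> measurable (wordM l) (count_space UNIV)"
proof -
  have "(\<lambda>\<omega>. pref \<omega> n) \<in> measurable (PiM UNIV (\<lambda>_::nat. count_space (UNIV::nat set))) (count_space UNIV)"
  proof (induction n)
    case 0 then show ?case by (simp add: pref_def)
  next
    case (Suc n)
    have e: "(\<lambda>\<omega>. pref \<omega> (Suc n)) = (\<lambda>\<omega>. (\<lambda>(x,y). x @ [y]) (pref \<omega> n, \<omega> n))"
      by (auto simp: pref_def)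
    show ?case unfolding e
      apply (rule measurable_compose[OF measurable_Pair[OF Suc]])
      apply measurable
      done
  qed
  then show ?thesis by (subst measurable_cong_sets[OF sets_W refl])
qed

lemma comp_meas[measurable]: "(\<lambda>a. a v) \<in> borel_measurable (labelM \<eta>)"
proof -
  have "(\<lambda>a. a v) \<in> measurable (PiM UNIV (\<lambda>_::nat list. count_space (UNIV::real set))) (count_space UNIV)"
    by measurable
  then have "(\<lambda>a. a v) \<in> measurable (labelM \<eta>) (count_space UNIV)"
    by (subst measurable_cong_sets[OF sets_L refl])
  moreover have "(\<lambda>x::real. x) \<in> measurable (count_space UNIV) borel"
    by (simp add: measurable_count_space_eq1)
  ultimately show ?thesis using measurable_compose by blast
qed

lemma F_meas: "(\<lambda>(a,\<omega>). fval lam a \<omega>) \<in> borel_measurable (labelM \<eta> \<Otimes>\<^sub>M wordM l)"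
proof -
  have t: "(\<lambda>x. fst x (pref (snd x) (Suc j)) * lam ^ Suc j) \<in> borel_measurable (labelM \<eta> \<Otimes>\<^sub>M wordM l)" for j
  proof -
    have "(\<lambda>x. (\<lambda>v x. fst x v * lam ^ Suc j) ((\<lambda>x. pref (snd x) (Suc j)) x) x) \<in> borel_measurable (labelM \<eta> \<Otimes>\<^sub>M wordM l)"
      by (rule measurable_compose_countable'[where I=UNIV]) auto
    then show ?thesis by simp
  qed
  show ?thesis unfolding fval_def case_prod_beta
    by (rule borel_measurable_suminf) (rule t)
qed

lemma F_meas1[measurable]: "fval lam a \<in> borel_measurable (wordM l)"
proof -
  have t: "(\<lambda>x. a (pref x (Suc j)) * lam ^ Suc j) \<in> borel_measurable (wordM l)" for j
  proof -
    have "(\<lambda>x. (\<lambda>v x. a v * lam ^ Suc j) ((\<lambda>x. pref x (Suc j)) x) x) \<in> borel_measurable (wordM l)"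
      by (rule measurable_compose_countable'[where I=UNIV]) auto
    then show ?thesis by simp
  qed
  show ?thesis unfolding fval_def 
    by (rule borel_measurable_suminf) (rule t)
qed

lemma F_meas'[measurable (raw)]:
  assumes "f \<in> measurable N (labelM \<eta>)" "g \<in> measurable N (wordM l)"
  shows "(\<lambda>x. fval lam (f x) (g x)) \<in> borel_measurable N"
  using measurable_compose[OF measurable_Pair[OF assms] F_meas] by simp

lemma prob_W: "prob_space (wordM l)"
  unfolding wordM_def by (intro prob_space_PiM prob_space_measure_pmf)

lemma prob_L: "prob_space (labelM \<eta>)"
  unfolding labelM_def by (intro prob_space_PiM prob_space_measure_pmf)

lemma space_W[simp]: "space (wordM l) = UNIV"
  by (auto simp: wordM_def space_PiM)

lemma space_L[simp]: "space (labelM \<eta>) = UNIV"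
  by (auto simp: labelM_def space_PiM)

lemma AE_labels: "AE a in labelM \<eta>. \<forall>v. a v \<in> set_pmf \<eta>"
  unfolding AE_all_countable labelM_def
  by (intro allI AE_PiM_component) (auto simp: AE_measure_pmf prob_space_measure_pmf)

lemma iexp_meas[measurable]: "(\<lambda>x. iexp x) \<in> borel_measurable borel"
  by (intro borel_measurable_continuous_onI continuous_intros)

lemma cnj_meas[measurable]: "(\<lambda>x::complex. cnj x) \<in> borel_measurable borel"
  by (intro borel_measurable_continuous_onI continuous_intros)

lemma iexp_cnj: "iexp a * cnj (iexp b) = iexp (a - b)"
proof -
  have "iexp a = cis a" "iexp b = cis b" "iexp (a-b) = cis (a-b)" by (simp_all add: cis_conv_exp)
  then show ?thesis by (simp add: cis_cnj cis_mult)
qed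

lemma Re_iexp: "Re (iexp a) = cos a"
  by (simp add: cis_conv_exp[symmetric])

lemma norm_iexp[simp]: "norm (iexp a) = 1"
  by (simp add: cis_conv_exp[symmetric])

lemma char_rmu: "char (rmu l lam a) t = (\<integral>\<omega>. iexp (t * fval lam a \<omega>) \<partial>wordM l)"
  unfolding char_def rmu_def by (subst integral_distr) auto

lemma sq_char:
  "(cmod (\<integral>\<omega>. iexp (t * fval lam a \<omega>) \<partial>wordM l))\<^sup>2
    = (\<integral>pp. cos (t * (fval lam a (fst pp) - fval lam a (snd pp))) \<partial>(wordM l \<Otimes>\<^sub>M wordM l))"
proof -
  interpret W: prob_space "wordM l" by (rule prob_W)
  interpret WW: pair_prob_space "wordM l" "wordM l" ..
  define f where "f \<omega> = iexp (t * fval lam a \<omega>)" for \<omega>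
  have fm[measurable]: "f \<in> borel_measurable (wordM l)" unfolding f_def by measurable
  have gm[measurable]: "(\<lambda>pp. f (fst pp) * cnj (f (snd pp))) \<in> borel_measurable (wordM l \<Otimes>\<^sub>M wordM l)"
    by measurable
  have fi: "integrable (wordM l) f"
    by (rule W.integrable_const_bound[where B=1]) (auto simp: f_def)
  have gi: "integrable (wordM l \<Otimes>\<^sub>M wordM l) (\<lambda>pp. f (fst pp) * cnj (f (snd pp)))"
    by (rule WW.P.integrable_const_bound[where B=1]) (simp_all add: f_def norm_mult)
  define z where "z = (\<integral>\<omega>. f \<omega> \<partial>wordM l)"
  have "z * cnj z = (\<integral>\<omega>. f \<omega> * cnj z \<partial>wordM l)" unfolding z_def by simp
  also have "\<dots> = (\<integral>\<omega>. (\<integral>\<omega>'. f \<omega> * cnj (f \<omega>') \<partial>wordM l) \<partial>wordM l)"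
    unfolding z_def by simp
  also have "\<dots> = (\<integral>pp. f (fst pp) * cnj (f (snd pp)) \<partial>(wordM l \<Otimes>\<^sub>M wordM l))"
    using WW.integral_fst'[OF gi] by simp
  finally have e: "z * cnj z = \<dots>" .
  have "(cmod z)\<^sup>2 = Re (z * cnj z)" by (simp add: complex_mult_cnj cmod_def)
  also have "\<dots> = (\<integral>pp. Re (f (fst pp) * cnj (f (snd pp))) \<partial>(wordM l \<Otimes>\<^sub>M wordM l))"
    unfolding e by (rule integral_Re[OF gi, symmetric])
  also have "\<dots> = (\<integral>pp. cos (t * (fval lam a (fst pp) - fval lam a (snd pp))) \<partial>(wordM l \<Otimes>\<^sub>M wordM l))"
    by (simp only: f_def iexp_cnj Re_iexp right_diff_distrib)
  finally show ?thesis unfolding z_def f_def .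
qed



lemma comp_meas_gen[measurable]: "i \<in> I \<Longrightarrow> (\<lambda>b. b i :: real) \<in> borel_measurable (PiM I (\<lambda>_. measure_pmf q))"
  using measurable_compose[OF measurable_component_singleton[of i I "\<lambda>_. measure_pmf q"], of "\<lambda>x. x" borel]
  by simp

lemma iexp_add: "iexp u * iexp v = iexp (u + v)"
proof -
  have "iexp u = cis u" "iexp v = cis v" "iexp (u+v) = cis (u+v)" by (simp_all add: cis_conv_exp)
  then show ?thesis by (simp add: cis_mult)
qed

lemma char_neg: "char M (-s) = cnj (char M s)"
proof -
  have "iexp (-s * x) = cnj (iexp (s * x))" for x
  proof -
    have "iexp (s*x) = cis (s*x)" "iexp (-s*x) = cis (-s*x)" by (simp_all add: cis_conv_exp)
    then show ?thesis by (simp add: cis_cnj)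
  qed
  then have "(\<lambda>x. iexp (-s * x)) = (\<lambda>x. cnj (iexp (s * x)))" by auto
  then show ?thesis unfolding char_def by simp
qed

lemma summ:
  fixes a :: "nat list \<Rightarrow> real" and lam :: real
  assumes "\<forall>v. a v \<in> S" "finite S" "\<bar>lam\<bar> < 1"
  shows "summable (\<lambda>j. a (v j) * lam ^ Suc j)"
proof -
  define C where "C = (\<Sum>y\<in>S. \<bar>y\<bar>)"
  have b: "\<bar>a x\<bar> \<le> C" for x unfolding C_def
    by (rule member_le_sum[of "a x" S abs]) (use assms in auto)
  have "summable (\<lambda>j. C * (\<bar>lam\<bar> * \<bar>lam\<bar>^j))"
    using assms by (intro summable_mult summable_geometric) simp
  then show ?thesis
  proof (rule summable_comparison_test'[where N=0])
    fix j :: nat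
    have "norm (a (v j) * lam ^ Suc j) = \<bar>a (v j)\<bar> * (\<bar>lam\<bar> * \<bar>lam\<bar>^j)"
      by (simp add: abs_mult power_abs)
    also have "\<dots> \<le> C * (\<bar>lam\<bar> * \<bar>lam\<bar>^j)"
      using b by (intro mult_right_mono) auto
    finally show "norm (a (v j) * lam ^ Suc j) \<le> C * (\<bar>lam\<bar> * \<bar>lam\<bar>^j)" .
  qed
qed

lemma F_split:
  fixes a :: "nat list \<Rightarrow> real" and lam :: real
  assumes "\<forall>v. a v \<in> S" "finite S" "\<bar>lam\<bar> < 1" "\<forall>i<k. \<omega> i = \<omega>' i"
  shows "fval lam a \<omega> - fval lam a \<omega>' =
     lam^k * ((\<Sum>n. a (pref \<omega> (n+k+1)) * lam^Suc n) - (\<Sum>n. a (pref \<omega>' (n+k+1)) * lam^Suc n))"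
proof -
  have split: "fval lam a w = lam^k * (\<Sum>n. a (pref w (n+k+1)) * lam^Suc n) + (\<Sum>i<k. a (pref w (Suc i)) * lam ^ Suc i)" for w
  proof -
    have "fval lam a w = (\<Sum>n. a (pref w (Suc (n + k))) * lam ^ Suc (n + k)) + (\<Sum>i<k. a (pref w (Suc i)) * lam ^ Suc i)"
      unfolding fval_def using summ[OF assms(1-3)] by (rule suminf_split_initial_segment)
    also have "(\<lambda>n. a (pref w (Suc (n + k))) * lam ^ Suc (n + k)) = (\<lambda>n. lam^k * (a (pref w (n+k+1)) * lam^Suc n))"
      by (auto simp: fun_eq_iff power_add)
    also have "(\<Sum>n. lam^k * (a (pref w (n+k+1)) * lam^Suc n)) = lam^k * (\<Sum>n. a (pref w (n+k+1)) * lam^Suc n)"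
      using summ[OF assms(1-3)] by (rule suminf_mult)
    finally show ?thesis .
  qed
  have "(\<Sum>i<k. a (pref \<omega> (Suc i)) * lam ^ Suc i) = (\<Sum>i<k. a (pref \<omega>' (Suc i)) * lam ^ Suc i)"
  proof (intro sum.cong refl)
    fix i assume "i \<in> {..<k}"
    then have "pref \<omega> (Suc i) = pref \<omega>' (Suc i)" using assms(4) by (auto simp: pref_def)
    then show "a (pref \<omega> (Suc i)) * lam ^ Suc i = a (pref \<omega>' (Suc i)) * lam ^ Suc i" by simp
  qed
  then show ?thesis using split[of \<omega>] split[of \<omega>'] by (simp add: right_diff_distrib)
qed

lemma indep_coords: "prob_space.indep_vars (labelM \<eta>) (\<lambda>_. measure_pmf \<eta>) (\<lambda>v a. a v) UNIV"
proof -
  interpret L: prob_space "labelM \<eta>" by (rule prob_L)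
  have rv: "\<And>v. (\<lambda>a. a v) \<in> measurable (labelM \<eta>) (measure_pmf \<eta>)"
    unfolding labelM_def by (rule measurable_component_singleton) simp
  have "distr (labelM \<eta>) (PiM UNIV (\<lambda>_. measure_pmf \<eta>)) (\<lambda>x. \<lambda>i\<in>UNIV. x i) = PiM UNIV (\<lambda>i. distr (labelM \<eta>) (measure_pmf \<eta>) (\<lambda>x. x i))"
  proof -
    have "distr (labelM \<eta>) (PiM UNIV (\<lambda>_. measure_pmf \<eta>)) (\<lambda>x. \<lambda>i\<in>UNIV. x i) = labelM \<eta>"
      by (simp add: restrict_UNIV labelM_def)
    also have "\<dots> = PiM UNIV (\<lambda>i. distr (labelM \<eta>) (measure_pmf \<eta>) (\<lambda>x. x i))"
      unfolding labelM_def
      by (subst distr_PiM_component) (auto simp: prob_space_measure_pmf)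
    finally show ?thesis .
  qed
  then show ?thesis
    by (subst L.indep_vars_iff_distr_eq_PiM[OF _ rv]) auto
qed

lemma exp_reindex:
  assumes "inj p"
  shows "(\<integral>a. iexp (s * (\<Sum>n. a (p n) * lam ^ Suc n)) \<partial>labelM \<eta>) = char (nu \<eta> lam) s"
proof -
  have d: "distr (labelM \<eta>) (PiM UNIV (\<lambda>_. measure_pmf \<eta>)) (\<lambda>a. \<lambda>n\<in>UNIV. a (p n)) = PiM UNIV (\<lambda>_. measure_pmf \<eta>)"
    using distr_PiM_reindex[of UNIV "\<lambda>_. measure_pmf \<eta>" p UNIV] assms
    unfolding labelM_def by (simp add: prob_space_measure_pmf)
  have m: "(\<lambda>a. \<lambda>n\<in>UNIV. a (p n)) \<in> measurable (labelM \<eta>) (PiM UNIV (\<lambda>_. measure_pmf \<eta>))"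
    unfolding labelM_def by (intro measurable_restrict measurable_component_singleton) auto
  have "char (nu \<eta> lam) s = (\<integral>b. iexp (s * (\<Sum>n. b n * lam ^ Suc n)) \<partial>PiM UNIV (\<lambda>_. measure_pmf \<eta>))"
    unfolding char_def nu_def by (subst integral_distr) auto
  also have "\<dots> = (\<integral>a. iexp (s * (\<Sum>n. (\<lambda>n\<in>UNIV. a (p n)) n * lam ^ Suc n)) \<partial>labelM \<eta>)"
    by (subst d[symmetric], subst integral_distr[OF m]) auto
  finally show ?thesis by simp
qed



lemma iexp_comp_meas: "f \<in> borel_measurable M \<Longrightarrow> (\<lambda>x. iexp (f x)) \<in> borel_measurable M"
  using measurable_compose[OF _ iexp_meas] by blast

lemma K:
  fixes \<omega> \<omega>' :: "nat \<Rightarrow> nat" and lam t :: real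
  assumes fin: "finite (set_pmf \<eta>)" and lam: "\<bar>lam\<bar> < 1"
    and agree: "\<forall>i<k. \<omega> i = \<omega>' i" and diff: "\<omega> k \<noteq> \<omega>' k"
  shows "(\<integral>a. cos (t * (fval lam a \<omega> - fval lam a \<omega>')) \<partial>labelM \<eta>)
       = (cmod (char (nu \<eta> lam) (t * lam ^ k)))\<^sup>2"
proof -
  interpret L: prob_space "labelM \<eta>" by (rule prob_L)
  define p where "p n = pref \<omega> (n+k+1)" for n
  define q where "q n = pref \<omega>' (n+k+1)" for n
  have lenp: "length (p n) = n+k+1" "length (q n) = n+k+1" for n by (simp_all add: p_def q_def pref_def)
  have nthp: "p n ! k = \<omega> k" "q n ! k = \<omega>' k" for n by (simp_all add: p_def q_def pref_def del: upt_Suc)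
  have injp: "inj p" by (rule injI) (metis lenp(1) add_right_cancel)
  have injq: "inj q" by (rule injI) (metis lenp(2) add_right_cancel)
  have disj: "range p \<inter> range q = {}"
  proof (safe)
    fix n m assume "p n = q m"
    then show "p n \<in> {}" using nthp[of n] nthp[of m] diff by metis
  qed
  define s where "s = t * lam ^ k"
  define X where "X a = (\<Sum>n. a (p n) * lam ^ Suc n)" for a :: "nat list \<Rightarrow> real"
  define Y where "Y a = (\<Sum>n. a (q n) * lam ^ Suc n)" for a :: "nat list \<Rightarrow> real"
  have Xm[measurable]: "X \<in> borel_measurable (labelM \<eta>)" unfolding X_def by measurable
  have Ym[measurable]: "Y \<in> borel_measurable (labelM \<eta>)" unfolding Y_def by measurable
  have ae: "AE a in labelM \<eta>. cos (t * (fval lam a \<omega> - fval lam a \<omega>')) = Re (iexp (s * X a) * iexp (- s * Y a))"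
    using AE_labels
  proof eventually_elim
    case (elim a)
    have "fval lam a \<omega> - fval lam a \<omega>' = lam^k * (X a - Y a)"
      unfolding X_def Y_def p_def q_def by (rule F_split[OF elim fin lam agree])
    then have "t * (fval lam a \<omega> - fval lam a \<omega>') = t * (lam^k * (X a - Y a))"
      by (simp only:)
    also have "\<dots> = s * X a + (- s * Y a)" by (simp add: s_def algebra_simps)
    finally have e: "t * (fval lam a \<omega> - fval lam a \<omega>') = s * X a + (- s * Y a)" .
    show ?case by (simp only: iexp_add Re_iexp e)
  qed
  have i1: "integrable (labelM \<eta>) (\<lambda>a. iexp (s * X a) * iexp (- s * Y a))"
  proof (rule L.integrable_const_bound[where B=1])
    show "AE x in labelM \<eta>. norm (iexp (s * X x) * iexp (- s * Y x)) \<le> 1"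
      by (intro AE_I2) (simp only: norm_mult norm_iexp mult_1)
    show "(\<lambda>a. iexp (s * X a) * iexp (- s * Y a)) \<in> borel_measurable (labelM \<eta>)"
      by (intro borel_measurable_times iexp_comp_meas borel_measurable_times borel_measurable_const Xm Ym)
  qed
  define A where "A = range p"
  define B where "B = range q"
  have iv: "L.indep_var (PiM A (\<lambda>_. measure_pmf \<eta>)) (\<lambda>a. restrict (\<lambda>i. a i) A) (PiM B (\<lambda>_. measure_pmf \<eta>)) (\<lambda>a. restrict (\<lambda>i. a i) B)"
    by (rule L.indep_var_restrict[OF indep_coords]) (use disj in \<open>auto simp: A_def B_def\<close>)
  define Y1 where "Y1 r = iexp (s * (\<Sum>n. r (p n) * lam ^ Suc n))" for r :: "nat list \<Rightarrow> real"
  define Y2 where "Y2 r = iexp (- s * (\<Sum>n. r (q n) * lam ^ Suc n))" for r :: "nat list \<Rightarrow> real"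
  have Y1m: "Y1 \<in> borel_measurable (PiM A (\<lambda>_. measure_pmf \<eta>))"
    unfolding Y1_def
    by (intro iexp_comp_meas borel_measurable_times borel_measurable_const borel_measurable_suminf
        comp_meas_gen) (simp add: A_def)
  have Y2m: "Y2 \<in> borel_measurable (PiM B (\<lambda>_. measure_pmf \<eta>))"
    unfolding Y2_def
    by (intro iexp_comp_meas borel_measurable_times borel_measurable_const borel_measurable_suminf
        comp_meas_gen) (simp add: B_def)
  have iv2: "L.indep_var borel (Y1 \<circ> (\<lambda>a. restrict (\<lambda>i. a i) A)) borel (Y2 \<circ> (\<lambda>a. restrict (\<lambda>i. a i) B))"
    by (rule L.indep_var_compose[OF iv Y1m Y2m])
  have c1: "(Y1 \<circ> (\<lambda>a. restrict (\<lambda>i. a i) A)) = (\<lambda>a. iexp (s * X a))"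
    by (simp add: fun_eq_iff Y1_def X_def A_def)
  have c2: "(Y2 \<circ> (\<lambda>a. restrict (\<lambda>i. a i) B)) = (\<lambda>a. iexp (- s * Y a))"
    by (simp add: fun_eq_iff Y2_def Y_def B_def)
  have ix: "integrable (labelM \<eta>) (\<lambda>a. iexp (s * X a))"
  proof (rule L.integrable_const_bound[where B=1])
    show "AE a in labelM \<eta>. norm (iexp (s * X a)) \<le> 1"
      by (intro AE_I2) (simp only: norm_iexp order_refl)
    show "(\<lambda>a. iexp (s * X a)) \<in> borel_measurable (labelM \<eta>)"
      by (intro iexp_comp_meas borel_measurable_times borel_measurable_const Xm Ym)
  qed
  have iy: "integrable (labelM \<eta>) (\<lambda>a. iexp (- s * Y a))"
  proof (rule L.integrable_const_bound[where B=1])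
    show "AE a in labelM \<eta>. norm (iexp (- s * Y a)) \<le> 1"
      by (intro AE_I2) (simp only: norm_iexp order_refl)
    show "(\<lambda>a. iexp (- s * Y a)) \<in> borel_measurable (labelM \<eta>)"
      by (intro iexp_comp_meas borel_measurable_times borel_measurable_const Xm Ym)
  qed
  have prod: "(\<integral>a. iexp (s * X a) * iexp (- s * Y a) \<partial>labelM \<eta>)
      = (\<integral>a. iexp (s * X a) \<partial>labelM \<eta>) * (\<integral>a. iexp (- s * Y a) \<partial>labelM \<eta>)"
    using L.indep_var_lebesgue_integral[OF iv2[unfolded c1 c2] ix iy] .
  have ex: "(\<integral>a. iexp (s * X a) \<partial>labelM \<eta>) = char (nu \<eta> lam) s"
    unfolding X_def by (rule exp_reindex[OF injp])
  have ey: "(\<integral>a. iexp (- s * Y a) \<partial>labelM \<eta>) = cnj (char (nu \<eta> lam) s)"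
    unfolding Y_def by (subst exp_reindex[OF injq]) (rule char_neg)
  have "(\<integral>a. cos (t * (fval lam a \<omega> - fval lam a \<omega>')) \<partial>labelM \<eta>)
      = (\<integral>a. Re (iexp (s * X a) * iexp (- s * Y a)) \<partial>labelM \<eta>)"
  proof (rule integral_cong_AE[OF _ _ ae])
    show "(\<lambda>a. cos (t * (fval lam a \<omega> - fval lam a \<omega>'))) \<in> borel_measurable (labelM \<eta>)"
      by measurable
    have "(\<lambda>a. iexp (s * X a) * iexp (- s * Y a)) \<in> borel_measurable (labelM \<eta>)"
      by (intro borel_measurable_times iexp_comp_meas borel_measurable_times borel_measurable_const Xm Ym)
    then show "(\<lambda>a. Re (iexp (s * X a) * iexp (- s * Y a))) \<in> borel_measurable (labelM \<eta>)"
      using measurable_compose[OF _ borel_measurable_Re] by blast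
  qed
  also have "\<dots> = Re (\<integral>a. iexp (s * X a) * iexp (- s * Y a) \<partial>labelM \<eta>)"
    by (rule integral_Re[OF i1])
  also have "\<dots> = (cmod (char (nu \<eta> lam) s))\<^sup>2"
    unfolding prod ex ey by (simp add: complex_mult_cnj cmod_def)
  finally show ?thesis unfolding s_def .
qed



lemma coord_W: "(\<lambda>\<omega>. \<omega> i) \<in> measurable (wordM l) (count_space UNIV)"
proof -
  have "(\<lambda>\<omega>. \<omega> i) \<in> measurable (PiM UNIV (\<lambda>_::nat. count_space (UNIV::nat set))) (count_space UNIV)"
    by (rule measurable_component_singleton) simp
  then show ?thesis by (subst measurable_cong_sets[OF sets_W refl])
qed

lemma eq_pred: "Measurable.pred (wordM l \<Otimes>\<^sub>M wordM l) (\<lambda>pp. fst pp i = snd pp i)"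
proof -
  have s[measurable]: "(\<lambda>pp. snd pp i) \<in> measurable (wordM l \<Otimes>\<^sub>M wordM l) (count_space UNIV)"
    using measurable_compose[OF measurable_snd[of "wordM l" "wordM l"] coord_W[of i l]] by simp
  have f: "(\<lambda>pp. fst pp i) \<in> measurable (wordM l \<Otimes>\<^sub>M wordM l) (count_space UNIV)"
    using measurable_compose[OF measurable_fst[of "wordM l" "wordM l"] coord_W[of i l]] by simp
  have "(\<lambda>pp. (\<lambda>v pp. v = snd pp i) (fst pp i) pp) \<in> measurable (wordM l \<Otimes>\<^sub>M wordM l) (count_space UNIV)"
    by (rule measurable_compose_countable'[where I=UNIV, OF _ f]) (auto simp: pred_def[symmetric])
  then show ?thesis by (simp add: pred_def)
qed

definition Aset :: "nat \<Rightarrow> ((nat \<Rightarrow> nat) \<times> (nat \<Rightarrow> nat)) set" where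
  "Aset k = {pp. \<forall>i<k. fst pp i = snd pp i}"

lemma Aset_sets: "Aset k \<in> sets (wordM l \<Otimes>\<^sub>M wordM l)"
proof -
  have [measurable]: "Measurable.pred (wordM l \<Otimes>\<^sub>M wordM l) (\<lambda>pp. fst pp i = snd pp i)" for i
    by (rule eq_pred)
  have "Measurable.pred (wordM l \<Otimes>\<^sub>M wordM l) (\<lambda>pp. \<forall>i<k. fst pp i = snd pp i)"
    by measurable
  then show ?thesis by (simp add: pred_def Aset_def space_pair_measure)
qed


lemma AE_word: assumes "l \<ge> 1" shows "AE \<omega> in wordM l. \<forall>i. \<omega> i \<in> {1..l}"
  unfolding AE_all_countable wordM_def
proof (intro allI)
  fix i :: nat
  have h: "AE x in measure_pmf (pmf_of_set {1..l}). x \<in> {1..l}"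
    using AE_measure_pmf[of "pmf_of_set {1..l}"] assms by simp
  show "AE x in PiM UNIV (\<lambda>_. measure_pmf (pmf_of_set {1..l})). x i \<in> {1..l}"
    by (rule AE_PiM_component[where P="\<lambda>x. x \<in> {1..l}" and I=UNIV and M="\<lambda>_. measure_pmf (pmf_of_set {1..l})" and i=i, OF prob_space_measure_pmf UNIV_I h])
qed

lemma Aset_measure:
  assumes "l \<ge> 1"
  shows "measure (wordM l \<Otimes>\<^sub>M wordM l) (Aset k) = (1 / real l)^k"
proof -
  interpret W: prob_space "wordM l" by (rule prob_W)
  have slice: "emeasure (wordM l) (Pair \<omega> -` Aset k) = ennreal ((1/real l)^k)" if w: "\<forall>i. \<omega> i \<in> {1..l}" for \<omega>
  proof -
    have e: "Pair \<omega> -` Aset k = prod_emb UNIV (\<lambda>_. measure_pmf (pmf_of_set {1..l})) {..<k} (PiE {..<k} (\<lambda>i. {\<omega> i}))"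
    proof (intro set_eqI)
      fix x :: "nat \<Rightarrow> nat"
      have "x \<in> Pair \<omega> -` Aset k \<longleftrightarrow> (\<forall>i<k. x i = \<omega> i)" by (auto simp: Aset_def)
      moreover have "x \<in> prod_emb UNIV (\<lambda>_. measure_pmf (pmf_of_set {1..l})) {..<k} (PiE {..<k} (\<lambda>i. {\<omega> i}))
          \<longleftrightarrow> (\<forall>i<k. x i = \<omega> i)"
        by (simp add: prod_emb_iff PiE_iff lessThan_iff Ball_def)
      ultimately show "x \<in> Pair \<omega> -` Aset k \<longleftrightarrow> x \<in> prod_emb UNIV (\<lambda>_. measure_pmf (pmf_of_set {1..l})) {..<k} (PiE {..<k} (\<lambda>i. {\<omega> i}))"
        by simp
    qed
    have "emeasure (wordM l) (Pair \<omega> -` Aset k) = (\<Prod>i\<in>{..<k}. emeasure (measure_pmf (pmf_of_set {1..l})) {\<omega> i})"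
      unfolding e wordM_def
      by (rule emeasure_PiM_emb) (auto simp: prob_space_measure_pmf)
    also have "\<dots> = (\<Prod>i\<in>{..<k}. ennreal (1 / real l))"
      proof (intro prod.cong refl)
      fix i assume "i \<in> {..<k}"
      have "\<omega> i \<in> {1..l}" using w by blast
      then have "pmf (pmf_of_set {1..l}) (\<omega> i) = 1 / real l" using assms by simp
      then show "emeasure (measure_pmf (pmf_of_set {1..l})) {\<omega> i} = ennreal (1 / real l)"
        by (simp add: emeasure_pmf_single)
    qed
    also have "\<dots> = ennreal ((1/real l)^k)"
      by (simp add: prod_ennreal[symmetric] ennreal_power)
    finally show ?thesis .
  qed
  have "emeasure (wordM l \<Otimes>\<^sub>M wordM l) (Aset k) = (\<integral>\<^sup>+\<omega>. emeasure (wordM l) (Pair \<omega> -` Aset k) \<partial>wordM l)"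
    by (rule W.emeasure_pair_measure_alt[OF Aset_sets])
  also have "\<dots> = (\<integral>\<^sup>+\<omega>. ennreal ((1/real l)^k) \<partial>wordM l)"
      proof (rule nn_integral_cong_AE)
    show "AE \<omega> in wordM l. emeasure (wordM l) (Pair \<omega> -` Aset k) = ennreal ((1/real l)^k)"
      using AE_word[OF assms] by eventually_elim (rule slice)
  qed
  also have "\<dots> = ennreal ((1/real l)^k)"
    using W.emeasure_space_1 by simp
  finally show ?thesis by (simp add: measure_def)
qed




theorem mainTheorem3:
  fixes l :: nat and \<eta> :: "real pmf" and lam t :: real and s :: nat
  assumes "l \<ge> 2"
    and "finite (set_pmf \<eta>)"
    and "0 < lam" and "lam < 1"
    and "s \<ge> 1"
    and "(1 / lam) ^ (s - 1) \<le> t" and "t \<le> (1 / lam) ^ s"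
  shows "(\<integral>a. (cmod (char (rmu l lam a) t))\<^sup>2 \<partial>labelM \<eta>)
     \<le> 1 / real l ^ s
        + (real l - 1) * (\<Sum>k<s. (1 / real l ^ (k + 1)) * (cmod (char (nu \<eta> lam) (t * lam ^ k)))\<^sup>2)"
proof -
  have l1: "l \<ge> 1" using assms(1) by simp
  have lamabs: "\<bar>lam\<bar> < 1" using assms(3,4) by simp
  note fin = assms(2)
  interpret L: prob_space "labelM \<eta>" by (rule prob_L)
  interpret W: prob_space "wordM l" by (rule prob_W)
  interpret WW: pair_prob_space "wordM l" "wordM l" ..
  interpret LP: pair_prob_space "labelM \<eta>" "wordM l \<Otimes>\<^sub>M wordM l" ..
  define G where "G a pp = cos (t * (fval lam a (fst pp) - fval lam a (snd pp)))" for a pp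
  define c where "c k = (cmod (char (nu \<eta> lam) (t * lam ^ k)))\<^sup>2" for k
  define U where "U pp = indicator (Aset s) pp + (\<Sum>k<s. c k * indicator (Aset k - Aset (Suc k)) pp)" for pp :: "(nat \<Rightarrow> nat) \<times> (nat \<Rightarrow> nat)"
  have Gm: "(\<lambda>x. G (fst x) (snd x)) \<in> borel_measurable (labelM \<eta> \<Otimes>\<^sub>M (wordM l \<Otimes>\<^sub>M wordM l))"
    unfolding G_def by measurable
  have Gi: "integrable (labelM \<eta> \<Otimes>\<^sub>M (wordM l \<Otimes>\<^sub>M wordM l)) (case_prod G)"
  proof (rule LP.P.integrable_const_bound[where B=1])
    show "AE x in labelM \<eta> \<Otimes>\<^sub>M (wordM l \<Otimes>\<^sub>M wordM l). norm (case_prod G x) \<le> 1"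
      by (intro AE_I2) (simp only: case_prod_beta G_def real_norm_def abs_cos_le_one)
    show "case_prod G \<in> borel_measurable (labelM \<eta> \<Otimes>\<^sub>M (wordM l \<Otimes>\<^sub>M wordM l))"
      using Gm unfolding case_prod_beta by this
  qed
  have step1: "(\<integral>a. (cmod (char (rmu l lam a) t))\<^sup>2 \<partial>labelM \<eta>)
      = (\<integral>a. (\<integral>pp. G a pp \<partial>(wordM l \<Otimes>\<^sub>M wordM l)) \<partial>labelM \<eta>)"
    by (rule Bochner_Integration.integral_cong[OF refl]) (simp only: char_rmu sq_char G_def[abs_def])
  have step2: "(\<integral>a. (\<integral>pp. G a pp \<partial>(wordM l \<Otimes>\<^sub>M wordM l)) \<partial>labelM \<eta>)
      = (\<integral>pp. (\<integral>a. G a pp \<partial>labelM \<eta>) \<partial>(wordM l \<Otimes>\<^sub>M wordM l))"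
    by (rule LP.Fubini_integral[OF Gi, symmetric])
  have Gpi: "integrable (labelM \<eta>) (\<lambda>a. G a pp)" for pp
  proof (rule L.integrable_const_bound[where B=1])
    show "AE a in labelM \<eta>. norm (G a pp) \<le> 1" by (intro AE_I2) (simp only: G_def real_norm_def abs_cos_le_one)
    show "(\<lambda>a. G a pp) \<in> borel_measurable (labelM \<eta>)" unfolding G_def by measurable
  qed
  have Vb: "\<bar>\<integral>a. G a pp \<partial>labelM \<eta>\<bar> \<le> 1" for pp
  proof -
    have "(\<integral>a. G a pp \<partial>labelM \<eta>) \<le> 1"
      by (rule L.integral_le_const[OF Gpi]) (intro AE_I2, simp only: G_def cos_le_one)
    moreover have "-1 \<le> (\<integral>a. G a pp \<partial>labelM \<eta>)"
      by (rule L.integral_ge_const[OF Gpi]) (intro AE_I2, simp only: G_def cos_ge_minus_one)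
    ultimately show ?thesis by simp
  qed
  have Vm: "(\<lambda>pp. \<integral>a. G a pp \<partial>labelM \<eta>) \<in> borel_measurable (wordM l \<Otimes>\<^sub>M wordM l)"
  proof (rule L.borel_measurable_lebesgue_integral[of "\<lambda>pp a. G a pp"])
    have "(\<lambda>x. G (snd x) (fst x)) \<in> borel_measurable ((wordM l \<Otimes>\<^sub>M wordM l) \<Otimes>\<^sub>M labelM \<eta>)"
      unfolding G_def by measurable
    then show "(\<lambda>(pp, a). G a pp) \<in> borel_measurable ((wordM l \<Otimes>\<^sub>M wordM l) \<Otimes>\<^sub>M labelM \<eta>)"
      unfolding case_prod_beta by this
  qed
  have Vi: "integrable (wordM l \<Otimes>\<^sub>M wordM l) (\<lambda>pp. \<integral>a. G a pp \<partial>labelM \<eta>)"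
  proof (rule WW.P.integrable_const_bound[where B=1])
    show "AE pp in wordM l \<Otimes>\<^sub>M wordM l. norm (\<integral>a. G a pp \<partial>labelM \<eta>) \<le> 1"
      by (intro AE_I2) (simp only: real_norm_def Vb)
  qed (rule Vm)
  have fin_em: "emeasure (wordM l \<Otimes>\<^sub>M wordM l) A < \<infinity>" for A
    using WW.P.emeasure_finite[of A] by (simp only: less_top[symmetric] infinity_ennreal_def not_False_eq_True)
  have Asets: "Aset k \<in> sets (wordM l \<Otimes>\<^sub>M wordM l)" for k by (rule Aset_sets)
  have ii: "integrable (wordM l \<Otimes>\<^sub>M wordM l) (indicator A :: _ \<Rightarrow> real)"
    if "A \<in> sets (wordM l \<Otimes>\<^sub>M wordM l)" for A
    by (rule integrable_real_indicator[OF that fin_em])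
  have ii2: "integrable (wordM l \<Otimes>\<^sub>M wordM l) (\<lambda>pp. c k * indicator (Aset k - Aset (Suc k)) pp)" for k
    by (rule Bochner_Integration.integrable_mult_right) (rule ii[OF sets.Diff[OF Asets Asets]])
  have ii3: "integrable (wordM l \<Otimes>\<^sub>M wordM l) (\<lambda>pp. \<Sum>k<s. c k * indicator (Aset k - Aset (Suc k)) pp)"
    by (rule Bochner_Integration.integrable_sum) (rule ii2)
  have Ui: "integrable (wordM l \<Otimes>\<^sub>M wordM l) U"
    unfolding U_def by (rule Bochner_Integration.integrable_add[OF ii[OF Asets] ii3])
  have pw: "(\<integral>a. G a pp \<partial>labelM \<eta>) \<le> U pp" for pp
  proof -
    obtain \<omega> \<omega>' where pp: "pp = (\<omega>, \<omega>')" by (cases pp)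
    show ?thesis
    proof (cases "\<forall>i<s. \<omega> i = \<omega>' i")
      case True
      have "U pp = 1"
      proof -
        have "pp \<in> Aset s" using True by (simp add: pp Aset_def)
        moreover have "indicator (Aset k - Aset (Suc k)) pp = (0::real)" if "k < s" for k
          using True that by (auto simp: pp Aset_def indicator_def)
        ultimately show ?thesis by (simp add: U_def)
      qed
      then show ?thesis using Vb[of pp] by simp
    next
      case False
      then obtain i where i: "i < s" "\<omega> i \<noteq> \<omega>' i" by auto
      define k where "k = (LEAST i. \<omega> i \<noteq> \<omega>' i)"
      have dk: "\<omega> k \<noteq> \<omega>' k" unfolding k_def by (rule LeastI[of _ i]) (rule i(2))
      have ks: "k < s" using Least_le[of "\<lambda>i. \<omega> i \<noteq> \<omega>' i" i] i unfolding k_def by simp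
      have ag: "\<forall>j<k. \<omega> j = \<omega>' j" unfolding k_def using not_less_Least by blast
      have V: "(\<integral>a. G a pp \<partial>labelM \<eta>) = c k"
        unfolding G_def c_def pp using K[OF fin lamabs ag dk] by simp
      have ind: "indicator (Aset j - Aset (Suc j)) pp = (if j = k then 1 else (0::real))" for j
      proof -
        have "pp \<in> Aset j - Aset (Suc j) \<longleftrightarrow> (\<forall>i<j. \<omega> i = \<omega>' i) \<and> \<omega> j \<noteq> \<omega>' j"
          by (auto simp: pp Aset_def less_Suc_eq)
        also have "\<dots> \<longleftrightarrow> j = k"
        proof
          assume h: "(\<forall>i<j. \<omega> i = \<omega>' i) \<and> \<omega> j \<noteq> \<omega>' j"
          show "j = k" unfolding k_def
            by (rule Least_equality[symmetric]) (use h in \<open>auto simp: not_le[symmetric]\<close>)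
        qed (use ag dk in auto)
        finally show ?thesis by (simp add: indicator_def)
      qed
      have "pp \<notin> Aset s" using i by (auto simp: pp Aset_def)
      then have "U pp = (\<Sum>j<s. (if j = k then c j else 0))"
        by (simp add: U_def ind if_distrib cong: if_cong)
      also have "\<dots> = c k" using ks by simp
      finally show ?thesis using V by simp
    qed
  qed
  have step3: "(\<integral>pp. (\<integral>a. G a pp \<partial>labelM \<eta>) \<partial>(wordM l \<Otimes>\<^sub>M wordM l)) \<le> (\<integral>pp. U pp \<partial>(wordM l \<Otimes>\<^sub>M wordM l))"
    by (rule Bochner_Integration.integral_mono[OF Vi Ui pw])
  have spWW: "space (wordM l \<Otimes>\<^sub>M wordM l) = UNIV" by (simp add: space_pair_measure)
  have mA: "measure (wordM l \<Otimes>\<^sub>M wordM l) (Aset k) = (1 / real l)^k" for k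
    by (rule Aset_measure[OF l1])
  have mD: "measure (wordM l \<Otimes>\<^sub>M wordM l) (Aset k - Aset (Suc k)) = (1 / real l)^k - (1 / real l)^Suc k" for k
  proof -
    have "Aset (Suc k) \<subseteq> Aset k" by (auto simp: Aset_def)
    then show ?thesis using WW.P.finite_measure_Diff[OF Asets Asets] mA by simp
  qed
  have IU: "(\<integral>pp. U pp \<partial>(wordM l \<Otimes>\<^sub>M wordM l)) = (1/real l)^s + (\<Sum>k<s. c k * ((1/real l)^k - (1/real l)^Suc k))"
  proof -
    have "(\<integral>pp. U pp \<partial>(wordM l \<Otimes>\<^sub>M wordM l)) =
      (\<integral>pp. indicator (Aset s) pp \<partial>(wordM l \<Otimes>\<^sub>M wordM l)) +
      (\<integral>pp. (\<Sum>k<s. c k * indicator (Aset k - Aset (Suc k)) pp) \<partial>(wordM l \<Otimes>\<^sub>M wordM l))"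
      unfolding U_def by (rule Bochner_Integration.integral_add[OF ii[OF Asets] ii3])
    also have "(\<integral>pp. (\<Sum>k<s. c k * indicator (Aset k - Aset (Suc k)) pp) \<partial>(wordM l \<Otimes>\<^sub>M wordM l))
        = (\<Sum>k<s. (\<integral>pp. c k * indicator (Aset k - Aset (Suc k)) pp \<partial>(wordM l \<Otimes>\<^sub>M wordM l)))"
      by (rule Bochner_Integration.integral_sum) (rule ii2)
    finally show ?thesis by (simp add: spWW mA mD)
  qed
  have alg: "c k * ((1/real l)^k - (1/real l)^Suc k) = (real l - 1) * ((1 / real l ^ (k + 1)) * c k)" for k
    using l1 by (simp add: field_simps power_one_over)
  have step4: "(\<integral>pp. U pp \<partial>(wordM l \<Otimes>\<^sub>M wordM l)) = 1 / real l ^ s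
        + (real l - 1) * (\<Sum>k<s. (1 / real l ^ (k + 1)) * (cmod (char (nu \<eta> lam) (t * lam ^ k)))\<^sup>2)"
    unfolding IU alg by (simp add: sum_distrib_left power_one_over c_def)
  show ?thesis using step1 step2 step3 step4 by simp
qed


end
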